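(* Assume $(X,T)$ is topologically mixing and $\phi$ satisfies (H2). Let $a\in\mathcal W^1$, $N\in\mathbb N$ with $\Omega^*=\{\omega\in\Omega_a:N_{aa}(\omega)\le N\}$ of positive measure. Then for a.e. $\omega\in\Omega^*$ and all $m,n\ge N$ with $\theta^m\omega,\theta^{m+n}\omega\in\Omega^*$, $$\mathcal Z^\omega_m(a)\,\mathcal Z^{\theta^m\omega}_n(a)\le B_{\theta^m\omega}\,\mathcal Z^\omega_{m+n}(a).$$
   Context: Let $(\Omega,\mathcal F,P)$ be a probability space and $\theta:\Omega\to\Omega$ an invertible, bimeasurable, $P$-preserving, ergodic map. Let $\ell:\Omega\to\mathbb N\cup\{\infty\}$ be measurable with $\ell_\omega>1$, and for a.e. $\omega$ let $A_\omega=(\alpha_{ij}(\omega))_{0\le i<\ell_\omega,\,0\le j<\ell_{\theta\omega}}$ be a $\{0,1\}$-matrix depending measurably on $\omega$ such that every row contains an entry $1$. Put $X_\omega=\{x=(x_0,x_1,\dots): x_i<\ell_{\theta^i\omega},\ \alpha_{x_ix_{i+1}}(\theta^i\omega)=1\ \forall i\ge0\}$, $T_\omega:X_\omega\to X_{\theta\omega}$ the left shift, $T^n_\omega=T_{\theta^{n-1}\omega}\circ\cdots\circ T_\omega$. A word $w=(w_0,\dots,w_{n-1})$ is $\omega$-admissible if $w_i<\ell_{\theta^i\omega}$ for all $i<n$ and $\alpha_{w_iw_{i+1}}(\theta^i\omega)=1$ for $i<n-1$; $\mathcal W^n_\omega$ is the set of such words of length $n$; $[w]_\omega=\{x\in X_\omega: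 x_i=w_i,\ i<n\}$; $\Omega_w=\{\omega: w\in\mathcal W^n_\omega\}$; $\mathcal W^n$ is the set of words $w$ of length $n$ with $P(\Omega_w)>0$. $(X,T)$ is topologically mixing if for all $a,b\in\mathcal W^1$ there is an $\mathbb N$-valued random variable $N_{ab}$ with $[a]_\omega\cap(T^n_\omega)^{-1}[b]_{\theta^n\omega}\ne\emptyset$ whenever $\omega\in\Omega_a$, $n\ge N_{ab}(\omega)$, $\theta^n\omega\in\Omega_b$. A potential is a measurable $\phi:X\to\mathbb R$, $(\omega,x)\mapsto\phi^\omega(x)$; $\phi^\omega_n(x)=\sum_{k=0}^{n-1}\phi^{\theta^k\omega}(T^k_\omega x)$; $V^\omega_n(\phi)=\sup\{|\phi^\omega(x)-\phi^\omega(y)|: x_i=y_i\ (i<n)\}$. $\phi$ is $k$-Hölder if there are $r\in(0,1)$ and a random variable $\kappa\ge1$ with $\int\log\kappa\,dP<\infty$ and $V^\omega_j(\phi)\le\kappa(\omega)r^j$ for all $j\ge k$, a.e. $\omega$; then $B_\omega:=\exp\sum_{j\ge1}\kappa(\theta^{-j}\omega)r^j$. (H2): $\phi$ is 2-Hölder and $\int\log B_\omega\,dP<\infty$. $L^{\omega,n}_\phi$ denotes the $n$-fold Ruelle operator, $L^{\omega,n}_\phi f(x)=\sum_{y\in X_\omega,T^n_\omega y=x}e^{\phi^\omega_n(y)}f(y)$. For $a\in\mathcal W^1$, $\omega\in\Omega_a$: $\mathcal W^n_\omega(a,a)=\{w\in\mathcal W^n_\omega: w_0=a,\ \alpha_{w_{n-1}a}(\theta^{n-1}\omega)=1\}$;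 fix a measurable family $\xi_\omega\in X_\omega$ with $\xi_\omega\in[a]_\omega$ for $\omega\in\Omega_a$; $\tau_w$ is the inverse of $T^n_\omega|_{[w]_\omega}$; $\mathcal Z^\omega_n(a)=\sum_{w\in\mathcal W^n_\omega(a,a)}e^{\phi^\omega_n(\tau_w(\xi_{\theta^n\omega}))}=L^{\omega,n}_\phi(1_{[a]_\omega})(\xi_{\theta^n\omega})$. *)

theory Defs
  imports "HOL-Probability.Probability" "HOL-Library.Extended_Nat"
begin

(* Sequences x = (x_0, x_1, ...) are functions nat => nat.
   ell :: 'w => enat  (values in N u {infinity}); alpha w i j  <->  alpha_ij(w) = 1. *)

definition base_system :: "'w measure \<Rightarrow> ('w \<Rightarrow> 'w) \<Rightarrow> bool" where
  "base_system M \<theta> \<longleftrightarrow>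
     prob_space M \<and>
     bij_betw \<theta> (space M) (space M) \<and>
     \<theta> \<in> M \<rightarrow>\<^sub>M M \<and>
     (\<forall>A\<in>sets M. \<theta> ` A \<in> sets M) \<and>
     (\<forall>A\<in>sets M. emeasure M (\<theta> -` A \<inter> space M) = emeasure M A) \<and>
     (\<forall>A\<in>sets M. \<theta> -` A \<inter> space M = A \<longrightarrow> measure M A = 0 \<or> measure M A = 1)"

definition theta_inv :: "'w measure \<Rightarrow> ('w \<Rightarrow> 'w) \<Rightarrow> 'w \<Rightarrow> 'w" where
  "theta_inv M \<theta> = the_inv_into (space M) \<theta>"

definition shift_space ::
  "'w measure \<Rightarrow> ('w \<Rightarrow> 'w) \<Rightarrow> ('w \<Rightarrow> enat) \<Rightarrow> ('w \<Rightarrow> nat \<Rightarrow> nat \<Rightarrow> bool) \<Rightarrow> bool" where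
  "shift_space M \<theta> \<L> \<alpha> \<longleftrightarrow>
     \<L> \<in> M \<rightarrow>\<^sub>M count_space UNIV \<and>
     (\<forall>\<omega>\<in>space M. \<L> \<omega> > 1) \<and>
     (\<forall>i j. {\<omega>\<in>space M. \<alpha> \<omega> i j} \<in> sets M) \<and>
     (\<forall>\<omega>\<in>space M. \<forall>i. enat i < \<L> \<omega> \<longrightarrow> (\<exists>j. enat j < \<L> (\<theta> \<omega>) \<and> \<alpha> \<omega> i j))"

definition Xfib :: "('w \<Rightarrow> 'w) \<Rightarrow> ('w \<Rightarrow> enat) \<Rightarrow> ('w \<Rightarrow> nat \<Rightarrow> nat \<Rightarrow> bool) \<Rightarrow> 'w \<Rightarrow> (nat \<Rightarrow> nat) set" where
  "Xfib \<theta> \<L> \<alpha> \<omega> = {x. \<forall>i. enat (x i) < \<L> ((\<theta>^^i) \<omega>) \<and> \<alpha> ((\<theta>^^i) \<omega>) (x i) (x (Suc i))}"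

definition shiftn :: "nat \<Rightarrow> (nat \<Rightarrow> nat) \<Rightarrow> (nat \<Rightarrow> nat)" where
  "shiftn n x = (\<lambda>i. x (i + n))"

definition admissible :: "('w \<Rightarrow> 'w) \<Rightarrow> ('w \<Rightarrow> enat) \<Rightarrow> ('w \<Rightarrow> nat \<Rightarrow> nat \<Rightarrow> bool) \<Rightarrow> 'w \<Rightarrow> nat list \<Rightarrow> bool" where
  "admissible \<theta> \<L> \<alpha> \<omega> w \<longleftrightarrow>
     (\<forall>i<length w. enat (w ! i) < \<L> ((\<theta>^^i) \<omega>)) \<and>
     (\<forall>i. Suc i < length w \<longrightarrow> \<alpha> ((\<theta>^^i) \<omega>) (w ! i) (w ! Suc i))"

definition Omega_w :: "'w measure \<Rightarrow> ('w \<Rightarrow> 'w) \<Rightarrow> ('w \<Rightarrow> enat) \<Rightarrow> ('w \<Rightarrow> nat \<Rightarrow> nat \<Rightarrow> bool) \<Rightarrow> nat list \<Rightarrow> 'w set" where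
  "Omega_w M \<theta> \<L> \<alpha> w = {\<omega>\<in>space M. admissible \<theta> \<L> \<alpha> \<omega> w}"

definition Wn :: "'w measure \<Rightarrow> ('w \<Rightarrow> 'w) \<Rightarrow> ('w \<Rightarrow> enat) \<Rightarrow> ('w \<Rightarrow> nat \<Rightarrow> nat \<Rightarrow> bool) \<Rightarrow> nat \<Rightarrow> nat list set" where
  "Wn M \<theta> \<L> \<alpha> n = {w. length w = n \<and> measure M (Omega_w M \<theta> \<L> \<alpha> w) > 0}"

definition cyl :: "('w \<Rightarrow> 'w) \<Rightarrow> ('w \<Rightarrow> enat) \<Rightarrow> ('w \<Rightarrow> nat \<Rightarrow> nat \<Rightarrow> bool) \<Rightarrow> 'w \<Rightarrow> nat list \<Rightarrow> (nat \<Rightarrow> nat) set" where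
  "cyl \<theta> \<L> \<alpha> \<omega> w = {x \<in> Xfib \<theta> \<L> \<alpha> \<omega>. \<forall>i<length w. x i = w ! i}"

(* topological mixing, with the family of random variables N_ab given explicitly *)
definition top_mixing_with ::
  "'w measure \<Rightarrow> ('w \<Rightarrow> 'w) \<Rightarrow> ('w \<Rightarrow> enat) \<Rightarrow> ('w \<Rightarrow> nat \<Rightarrow> nat \<Rightarrow> bool) \<Rightarrow> (nat \<Rightarrow> nat \<Rightarrow> 'w \<Rightarrow> nat) \<Rightarrow> bool" where
  "top_mixing_with M \<theta> \<L> \<alpha> Nm \<longleftrightarrow>
     (\<forall>a b. [a] \<in> Wn M \<theta> \<L> \<alpha> 1 \<longrightarrow> [b] \<in> Wn M \<theta> \<L> \<alpha> 1 \<longrightarrow>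
        Nm a b \<in> M \<rightarrow>\<^sub>M count_space UNIV \<and>
        (\<forall>\<omega>\<in>Omega_w M \<theta> \<L> \<alpha> [a]. \<forall>n. n \<ge> Nm a b \<omega> \<longrightarrow> (\<theta>^^n) \<omega> \<in> Omega_w M \<theta> \<L> \<alpha> [b] \<longrightarrow>
            cyl \<theta> \<L> \<alpha> \<omega> [a] \<inter> {x \<in> Xfib \<theta> \<L> \<alpha> \<omega>. shiftn n x \<in> cyl \<theta> \<L> \<alpha> ((\<theta>^^n) \<omega>) [b]} \<noteq> {}))"

definition top_mixing ::
  "'w measure \<Rightarrow> ('w \<Rightarrow> 'w) \<Rightarrow> ('w \<Rightarrow> enat) \<Rightarrow> ('w \<Rightarrow> nat \<Rightarrow> nat \<Rightarrow> bool) \<Rightarrow> bool" where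
  "top_mixing M \<theta> \<L> \<alpha> \<longleftrightarrow> (\<exists>Nm. top_mixing_with M \<theta> \<L> \<alpha> Nm)"

definition Xall :: "'w measure \<Rightarrow> ('w \<Rightarrow> 'w) \<Rightarrow> ('w \<Rightarrow> enat) \<Rightarrow> ('w \<Rightarrow> nat \<Rightarrow> nat \<Rightarrow> bool) \<Rightarrow> ('w \<times> (nat \<Rightarrow> nat)) set" where
  "Xall M \<theta> \<L> \<alpha> = {(\<omega>, x). \<omega> \<in> space M \<and> x \<in> Xfib \<theta> \<L> \<alpha> \<omega>}"

definition seq_measure :: "(nat \<Rightarrow> nat) measure" where
  "seq_measure = PiM UNIV (\<lambda>_. count_space UNIV)"

definition potential ::
  "'w measure \<Rightarrow> ('w \<Rightarrow> 'w) \<Rightarrow> ('w \<Rightarrow> enat) \<Rightarrow> ('w \<Rightarrow> nat \<Rightarrow> nat \<Rightarrow> bool) \<Rightarrow> ('w \<Rightarrow> (nat \<Rightarrow> nat) \<Rightarrow> real) \<Rightarrow> bool" where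
  "potential M \<theta> \<L> \<alpha> \<phi> \<longleftrightarrow>
     (\<lambda>(\<omega>, x). \<phi> \<omega> x) \<in> borel_measurable (restrict_space (M \<Otimes>\<^sub>M seq_measure) (Xall M \<theta> \<L> \<alpha>))"

definition phin :: "('w \<Rightarrow> 'w) \<Rightarrow> ('w \<Rightarrow> (nat \<Rightarrow> nat) \<Rightarrow> real) \<Rightarrow> 'w \<Rightarrow> nat \<Rightarrow> (nat \<Rightarrow> nat) \<Rightarrow> real" where
  "phin \<theta> \<phi> \<omega> n x = (\<Sum>k<n. \<phi> ((\<theta>^^k) \<omega>) (shiftn k x))"

definition Var :: "('w \<Rightarrow> 'w) \<Rightarrow> ('w \<Rightarrow> enat) \<Rightarrow> ('w \<Rightarrow> nat \<Rightarrow> nat \<Rightarrow> bool) \<Rightarrow> ('w \<Rightarrow> (nat \<Rightarrow> nat) \<Rightarrow> real) \<Rightarrow> 'w \<Rightarrow> nat \<Rightarrow> ereal" where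
  "Var \<theta> \<L> \<alpha> \<phi> \<omega> n =
     (SUP p \<in> {(x, y). x \<in> Xfib \<theta> \<L> \<alpha> \<omega> \<and> y \<in> Xfib \<theta> \<L> \<alpha> \<omega> \<and> (\<forall>i<n. x i = y i)}.
        ereal \<bar>\<phi> \<omega> (fst p) - \<phi> \<omega> (snd p)\<bar>)"

definition hoelder ::
  "'w measure \<Rightarrow> ('w \<Rightarrow> 'w) \<Rightarrow> ('w \<Rightarrow> enat) \<Rightarrow> ('w \<Rightarrow> nat \<Rightarrow> nat \<Rightarrow> bool) \<Rightarrow> ('w \<Rightarrow> (nat \<Rightarrow> nat) \<Rightarrow> real)
     \<Rightarrow> nat \<Rightarrow> real \<Rightarrow> ('w \<Rightarrow> real) \<Rightarrow> bool" where
  "hoelder M \<theta> \<L> \<alpha> \<phi> k r \<kappa> \<longleftrightarrow>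
     0 < r \<and> r < 1 \<and>
     \<kappa> \<in> borel_measurable M \<and> (\<forall>\<omega>\<in>space M. \<kappa> \<omega> \<ge> 1) \<and>
     integrable M (\<lambda>\<omega>. ln (\<kappa> \<omega>)) \<and>
     (AE \<omega> in M. \<forall>j\<ge>k. Var \<theta> \<L> \<alpha> \<phi> \<omega> j \<le> ereal (\<kappa> \<omega> * r ^ j))"

definition logB :: "'w measure \<Rightarrow> ('w \<Rightarrow> 'w) \<Rightarrow> real \<Rightarrow> ('w \<Rightarrow> real) \<Rightarrow> 'w \<Rightarrow> real" where
  "logB M \<theta> r \<kappa> \<omega> = (\<Sum>j. \<kappa> ((theta_inv M \<theta> ^^ Suc j) \<omega>) * r ^ Suc j)"

definition Bfun :: "'w measure \<Rightarrow> ('w \<Rightarrow> 'w) \<Rightarrow> real \<Rightarrow> ('w \<Rightarrow> real) \<Rightarrow> 'w \<Rightarrow> real" where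
  "Bfun M \<theta> r \<kappa> \<omega> = exp (logB M \<theta> r \<kappa> \<omega>)"

(* (H2): phi is 2-Hoelder and int log B dP < infinity
   (log B >= 0, so finiteness of the integral means: the series converges a.e.
    and log B is integrable) *)
definition H2 ::
  "'w measure \<Rightarrow> ('w \<Rightarrow> 'w) \<Rightarrow> ('w \<Rightarrow> enat) \<Rightarrow> ('w \<Rightarrow> nat \<Rightarrow> nat \<Rightarrow> bool) \<Rightarrow> ('w \<Rightarrow> (nat \<Rightarrow> nat) \<Rightarrow> real)
     \<Rightarrow> real \<Rightarrow> ('w \<Rightarrow> real) \<Rightarrow> bool" where
  "H2 M \<theta> \<L> \<alpha> \<phi> r \<kappa> \<longleftrightarrow>
     hoelder M \<theta> \<L> \<alpha> \<phi> 2 r \<kappa> \<and>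
     (AE \<omega> in M. summable (\<lambda>j. \<kappa> ((theta_inv M \<theta> ^^ Suc j) \<omega>) * r ^ Suc j)) \<and>
     integrable M (\<lambda>\<omega>. ln (Bfun M \<theta> r \<kappa> \<omega>))"

definition ruelle ::
  "('w \<Rightarrow> 'w) \<Rightarrow> ('w \<Rightarrow> enat) \<Rightarrow> ('w \<Rightarrow> nat \<Rightarrow> nat \<Rightarrow> bool) \<Rightarrow> ('w \<Rightarrow> (nat \<Rightarrow> nat) \<Rightarrow> real)
     \<Rightarrow> 'w \<Rightarrow> nat \<Rightarrow> ((nat \<Rightarrow> nat) \<Rightarrow> ennreal) \<Rightarrow> (nat \<Rightarrow> nat) \<Rightarrow> ennreal" where
  "ruelle \<theta> \<L> \<alpha> \<phi> \<omega> n f x =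
     (\<integral>\<^sup>+ y. ennreal (exp (phin \<theta> \<phi> \<omega> n y)) * f y
        \<partial>count_space {y \<in> Xfib \<theta> \<L> \<alpha> \<omega>. shiftn n y = x})"

definition Zfun ::
  "('w \<Rightarrow> 'w) \<Rightarrow> ('w \<Rightarrow> enat) \<Rightarrow> ('w \<Rightarrow> nat \<Rightarrow> nat \<Rightarrow> bool) \<Rightarrow> ('w \<Rightarrow> (nat \<Rightarrow> nat) \<Rightarrow> real)
     \<Rightarrow> ('w \<Rightarrow> nat \<Rightarrow> nat) \<Rightarrow> nat \<Rightarrow> 'w \<Rightarrow> nat \<Rightarrow> ennreal" where
  "Zfun \<theta> \<L> \<alpha> \<phi> \<xi> a \<omega> n =
     ruelle \<theta> \<L> \<alpha> \<phi> \<omega> n (indicator (cyl \<theta> \<L> \<alpha> \<omega> [a])) (\<xi> ((\<theta>^^n) \<omega>))"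

end

theory Submission
  imports Defs
begin


lemma base_space_pow:
  assumes base: "base_system M \<theta>" and w: "\<omega> \<in> space M"
  shows "(\<theta>^^k) \<omega> \<in> space M"
proof -
  have b: "bij_betw \<theta> (space M) (space M)" using base by (simp add: base_system_def)
  show ?thesis
    by (induction k) (use w b in \<open>auto dest: bij_betwE\<close>)
qed

lemma tinv_cancel:
  assumes base: "base_system M \<theta>" and x: "x \<in> space M"
  shows "theta_inv M \<theta> (\<theta> x) = x"
proof -
  have b: "bij_betw \<theta> (space M) (space M)" using base by (simp add: base_system_def)
  show ?thesis unfolding theta_inv_def
    by (rule the_inv_into_f_f[OF bij_betw_imp_inj_on[OF b] x])
qed

lemma tinv_space:
  assumes base: "base_system M \<theta>" and x: "x \<in> space M"
  shows "(theta_inv M \<theta> ^^ j) x \<in> space M"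
proof -
  have b: "bij_betw \<theta> (space M) (space M)" using base by (simp add: base_system_def)
  show ?thesis
  proof (induction j)
    case 0 then show ?case using x by simp
  next
    case (Suc j)
    have "theta_inv M \<theta> ((theta_inv M \<theta> ^^ j) x) \<in> space M"
      using the_inv_into_into[OF bij_betw_imp_inj_on[OF b], of "(theta_inv M \<theta> ^^ j) x" "space M"] Suc b
      unfolding theta_inv_def by (simp add: bij_betw_def)
    then show ?case by simp
  qed
qed

lemma tinv_pow:
  assumes base: "base_system M \<theta>" and w: "\<omega> \<in> space M"
  shows "i \<le> m \<Longrightarrow> (theta_inv M \<theta> ^^ i) ((\<theta>^^m) \<omega>) = (\<theta>^^(m-i)) \<omega>"
proof (induction i)
  case 0 then show ?case by simp
next
  case (Suc i)
  then have e: "m - i = Suc (m - Suc i)" by simp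
  have "(theta_inv M \<theta> ^^ Suc i) ((\<theta>^^m) \<omega>) = theta_inv M \<theta> ((\<theta>^^(m-i)) \<omega>)"
    using Suc by simp
  also have "\<dots> = theta_inv M \<theta> (\<theta> ((\<theta>^^(m - Suc i)) \<omega>))" by (simp only: e funpow.simps o_apply)
  also have "\<dots> = (\<theta>^^(m - Suc i)) \<omega>" by (rule tinv_cancel[OF base base_space_pow[OF base w]])
  finally show ?case .
qed

lemma shift_X:
  assumes "x \<in> Xfib \<theta> L \<alpha> \<omega>"
  shows "shiftn k x \<in> Xfib \<theta> L \<alpha> ((\<theta>^^k) \<omega>)"
proof -
  have e: "\<And>i. (\<theta>^^i) ((\<theta>^^k) \<omega>) = (\<theta>^^(i+k)) \<omega>" by (simp add: funpow_add)
  show ?thesis using assms unfolding Xfib_def shiftn_def by (simp add: e)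
qed

lemma phin_add:
  "phin \<theta> \<phi> \<omega> (m+n) u = phin \<theta> \<phi> \<omega> m u + phin \<theta> \<phi> ((\<theta>^^m) \<omega>) n (shiftn m u)"
proof (induction n)
  case 0 then show ?case by (simp add: phin_def)
next
  case (Suc n)
  have e1: "(\<theta>^^n) ((\<theta>^^m) \<omega>) = (\<theta>^^(m+n)) \<omega>" by (metis add.commute comp_apply funpow_add)
  have e2: "shiftn n (shiftn m u) = shiftn (m+n) u" by (simp add: shiftn_def ac_simps)
  show ?case using Suc by (simp add: phin_def e1 e2)
qed

lemma Z_rewrite:
  "Zfun \<theta> L \<alpha> \<phi> \<xi> a \<omega> m =
   (\<integral>\<^sup>+y. ennreal (exp (phin \<theta> \<phi> \<omega> m y)) \<partial>count_space {y \<in> Xfib \<theta> L \<alpha> \<omega>. shiftn m y = \<xi> ((\<theta>^^m) \<omega>) \<and> y 0 = a})"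
  unfolding Zfun_def ruelle_def
  by (auto simp: nn_integral_count_space_indicator cyl_def intro!: nn_integral_cong split: split_indicator)

lemma prod_count:
  fixes f g :: "'a \<Rightarrow> ennreal"
  shows "(\<integral>\<^sup>+y. f y \<partial>count_space A) * (\<integral>\<^sup>+z. g z \<partial>count_space B)
     = (\<integral>\<^sup>+p. f (fst p) * g (snd p) \<partial>count_space (A \<times> B))"
proof -
  have "(\<integral>\<^sup>+y. f y \<partial>count_space A) * (\<integral>\<^sup>+z. g z \<partial>count_space B)
      = (\<integral>\<^sup>+y. f y * indicator A y \<partial>count_space UNIV) * (\<integral>\<^sup>+z. g z * indicator B z \<partial>count_space UNIV)"
    by (simp add: nn_integral_count_space_indicator)
  also have "\<dots> = (\<integral>\<^sup>+y. f y * indicator A y * (\<integral>\<^sup>+z. g z * indicator B z \<partial>count_space UNIV) \<partial>count_space UNIV)"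
    by (rule nn_integral_multc[symmetric]) simp
  also have "\<dots> = (\<integral>\<^sup>+y. \<integral>\<^sup>+z. f y * indicator A y * (g z * indicator B z) \<partial>count_space UNIV \<partial>count_space UNIV)"
    by (rule nn_integral_cong, rule nn_integral_cmult[symmetric]) simp
  also have "\<dots> = (\<integral>\<^sup>+p. (\<lambda>(y,z). f y * indicator A y * (g z * indicator B z)) p \<partial>count_space UNIV)"
    using nn_integral_fst_count_space[of "\<lambda>(y,z). f y * indicator A y * (g z * indicator B z)"] by simp
  also have "\<dots> = (\<integral>\<^sup>+p. f (fst p) * g (snd p) * indicator (A \<times> B) p \<partial>count_space UNIV)"
    by (rule nn_integral_cong) (auto simp: indicator_def)
  also have "\<dots> = (\<integral>\<^sup>+p. f (fst p) * g (snd p) \<partial>count_space (A \<times> B))"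
    by (simp add: nn_integral_count_space_indicator)
  finally show ?thesis .
qed

lemma reindex_le:
  fixes h :: "'b \<Rightarrow> ennreal"
  assumes "inj_on c S" "c ` S \<subseteq> C"
  shows "(\<integral>\<^sup>+p. h (c p) \<partial>count_space S) \<le> (\<integral>\<^sup>+u. h u \<partial>count_space C)"
proof -
  have "(\<integral>\<^sup>+p. h (c p) \<partial>count_space S) = (\<integral>\<^sup>+u. h u \<partial>count_space (c ` S))"
    by (rule nn_integral_bij_count_space) (use assms in \<open>simp add: inj_on_imp_bij_betw\<close>)
  also have "\<dots> \<le> (\<integral>\<^sup>+u. h u \<partial>count_space C)"
    using assms(2) by (auto simp: nn_integral_count_space_indicator image_subset_iff intro!: nn_integral_mono split: split_indicator)
  finally show ?thesis .
qed



lemma pot_bound: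
  assumes base: "base_system M \<theta>" and w: "\<omega> \<in> space M"
    and r: "0 < r" "r < 1" and kap: "\<forall>x\<in>space M. \<kappa> x \<ge> 1"
    and hV: "\<forall>k. \<forall>j\<ge>2. Var \<theta> L \<alpha> \<phi> ((\<theta>^^k) \<omega>) j \<le> ereal (\<kappa> ((\<theta>^^k) \<omega>) * r ^ j)"
    and hs: "summable (\<lambda>j. \<kappa> ((theta_inv M \<theta> ^^ Suc j) ((\<theta>^^m) \<omega>)) * r ^ Suc j)"
    and y: "y \<in> Xfib \<theta> L \<alpha> \<omega>" and u: "u \<in> Xfib \<theta> L \<alpha> \<omega>"
    and yu: "\<forall>i\<le>m. y i = u i"
  shows "phin \<theta> \<phi> \<omega> m y \<le> phin \<theta> \<phi> \<omega> m u + logB M \<theta> r \<kappa> ((\<theta>^^m) \<omega>)"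
proof -
  define g where "g k = \<kappa> ((\<theta>^^k) \<omega>) * r ^ (m - k + 1)" for k
  have each: "\<phi> ((\<theta>^^k) \<omega>) (shiftn k y) \<le> \<phi> ((\<theta>^^k) \<omega>) (shiftn k u) + g k" if k: "k < m" for k
  proof -
    let ?j = "m - k + 1"
    have mem: "(shiftn k y, shiftn k u) \<in> {(x, y). x \<in> Xfib \<theta> L \<alpha> ((\<theta>^^k) \<omega>) \<and> y \<in> Xfib \<theta> L \<alpha> ((\<theta>^^k) \<omega>) \<and> (\<forall>i<?j. x i = y i)}"
      using shift_X[OF y, of k] shift_X[OF u, of k] yu k by (auto simp: shiftn_def)
    have "ereal \<bar>\<phi> ((\<theta>^^k) \<omega>) (shiftn k y) - \<phi> ((\<theta>^^k) \<omega>) (shiftn k u)\<bar> \<le> Var \<theta> L \<alpha> \<phi> ((\<theta>^^k) \<omega>) ?j"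
      unfolding Var_def using mem by (intro SUP_upper2[OF mem]) simp
    also have "\<dots> \<le> ereal (g k)" unfolding g_def using hV k by (metis Suc_eq_plus1 Suc_le_mono add_2_eq_Suc' le_add2 less_imp_Suc_add plus_1_eq_Suc zero_less_diff)
    finally show ?thesis by simp
  qed
  have s1: "phin \<theta> \<phi> \<omega> m y \<le> phin \<theta> \<phi> \<omega> m u + (\<Sum>k<m. g k)"
    unfolding phin_def sum.distrib[symmetric] by (rule sum_mono) (use each in auto)
  have "(\<Sum>k<m. g k) = (\<Sum>j<m. g (m - Suc j))" by (rule sum.nat_diff_reindex[symmetric])
  also have "\<dots> \<le> (\<Sum>j<m. \<kappa> ((theta_inv M \<theta> ^^ Suc j) ((\<theta>^^m) \<omega>)) * r ^ Suc j)"
  proof (rule sum_mono)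
    fix j assume "j \<in> {..<m}"
    then have j: "j < m" by simp
    have e: "(theta_inv M \<theta> ^^ Suc j) ((\<theta>^^m) \<omega>) = (\<theta>^^(m - Suc j)) \<omega>"
      using tinv_pow[OF base w, of "Suc j" m] j by (simp del: funpow.simps)
    have ex: "m - (m - Suc j) + 1 = Suc (Suc j)" using j by simp
    have k0: "\<kappa> ((\<theta>^^(m - Suc j)) \<omega>) \<ge> 0" using kap base_space_pow[OF base w] by (meson order.trans zero_le_one)
    have "r ^ Suc (Suc j) \<le> r ^ Suc j" using r by (intro power_decreasing) auto
    then show "g (m - Suc j) \<le> \<kappa> ((theta_inv M \<theta> ^^ Suc j) ((\<theta>^^m) \<omega>)) * r ^ Suc j"
      unfolding g_def e ex using k0 by (intro mult_left_mono) auto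
  qed
  also have "\<dots> \<le> logB M \<theta> r \<kappa> ((\<theta>^^m) \<omega>)"
    unfolding logB_def
  proof (rule sum_le_suminf[OF hs])
    show "finite {..<m}" by simp
    fix j show "0 \<le> \<kappa> ((theta_inv M \<theta> ^^ Suc j) ((\<theta>^^m) \<omega>)) * r ^ Suc j"
      using kap tinv_space[OF base base_space_pow[OF base w]] r
      by (meson less_imp_le order.trans zero_le_one zero_le_mult_iff zero_le_power)
  qed
  finally show ?thesis using s1 by simp
qed



lemma key:
  assumes base: "base_system M \<theta>" and w: "\<omega> \<in> space M"
    and r: "0 < r" "r < 1" and kap: "\<forall>x\<in>space M. \<kappa> x \<ge> 1"
    and hV: "\<forall>k. \<forall>j\<ge>2. Var \<theta> L \<alpha> \<phi> ((\<theta>^^k) \<omega>) j \<le> ereal (\<kappa> ((\<theta>^^k) \<omega>) * r ^ j)"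
    and hs: "summable (\<lambda>j. \<kappa> ((theta_inv M \<theta> ^^ Suc j) ((\<theta>^^m) \<omega>)) * r ^ Suc j)"
    and ha: "\<xi> ((\<theta>^^m) \<omega>) 0 = a"
  shows "Zfun \<theta> L \<alpha> \<phi> \<xi> a \<omega> m * Zfun \<theta> L \<alpha> \<phi> \<xi> a ((\<theta>^^m) \<omega>) n
          \<le> ennreal (Bfun M \<theta> r \<kappa> ((\<theta>^^m) \<omega>)) * Zfun \<theta> L \<alpha> \<phi> \<xi> a \<omega> (m+n)"
proof -
  define A where "A = {y \<in> Xfib \<theta> L \<alpha> \<omega>. shiftn m y = \<xi> ((\<theta>^^m) \<omega>) \<and> y 0 = a}"
  define B where "B = {z \<in> Xfib \<theta> L \<alpha> ((\<theta>^^m) \<omega>). shiftn n z = \<xi> ((\<theta>^^n) ((\<theta>^^m) \<omega>)) \<and> z 0 = a}"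
  define C where "C = {u \<in> Xfib \<theta> L \<alpha> \<omega>. shiftn (m+n) u = \<xi> ((\<theta>^^(m+n)) \<omega>) \<and> u 0 = a}"
  define cc where "cc p = (\<lambda>i. if i < m then fst p i else snd p (i - m))" for p :: "(nat \<Rightarrow> nat) \<times> (nat \<Rightarrow> nat)"
  define Bc where "Bc = Bfun M \<theta> r \<kappa> ((\<theta>^^m) \<omega>)"
  define h where "h u = ennreal (exp (phin \<theta> \<phi> \<omega> (m+n) u))" for u
  have th: "\<And>i. i \<ge> m \<Longrightarrow> (\<theta>^^(i-m)) ((\<theta>^^m) \<omega>) = (\<theta>^^i) \<omega>"
  proof -
    fix i assume "i \<ge> m"
    then have "i = (i - m) + m" by simp
    then have "(\<theta>^^i) \<omega> = (\<theta>^^((i - m) + m)) \<omega>" by simp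
    then show "(\<theta>^^(i-m)) ((\<theta>^^m) \<omega>) = (\<theta>^^i) \<omega>" by (simp add: funpow_add)
  qed
  have thmn: "(\<theta>^^n) ((\<theta>^^m) \<omega>) = (\<theta>^^(m+n)) \<omega>" by (metis add.commute comp_apply funpow_add)
  have props: "cc p \<in> Xfib \<theta> L \<alpha> \<omega> \<and> shiftn m (cc p) = snd p \<and> (\<forall>i\<le>m. fst p i = cc p i)
      \<and> cc p \<in> C" if p: "p \<in> A \<times> B" for p
  proof -
    obtain y z where pyz: "p = (y, z)" by (cases p)
    have yA: "y \<in> A" and zB: "z \<in> B" using p pyz by auto
    have ym: "y m = a" 
    proof -
      have "shiftn m y 0 = \<xi> ((\<theta>^^m) \<omega>) 0" using yA unfolding A_def by simp
      then show ?thesis using ha by (simp add: shiftn_def)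
    qed
    have z0: "z 0 = a" using zB unfolding B_def by simp
    have yX: "\<And>i. enat (y i) < L ((\<theta>^^i) \<omega>) \<and> \<alpha> ((\<theta>^^i) \<omega>) (y i) (y (Suc i))"
      using yA unfolding A_def Xfib_def by auto
    have zX: "\<And>i. enat (z i) < L ((\<theta>^^i) ((\<theta>^^m) \<omega>)) \<and> \<alpha> ((\<theta>^^i) ((\<theta>^^m) \<omega>)) (z i) (z (Suc i))"
      using zB unfolding B_def Xfib_def by auto
    have X: "cc p \<in> Xfib \<theta> L \<alpha> \<omega>"
      unfolding Xfib_def
    proof (intro CollectI allI conjI)
      fix i
      show "enat (cc p i) < L ((\<theta>^^i) \<omega>)"
        using yX[of i] zX[of "i-m"] th[of i] by (auto simp: cc_def pyz)
      show "\<alpha> ((\<theta>^^i) \<omega>) (cc p i) (cc p (Suc i))"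
      proof (cases "Suc i < m")
        case True then show ?thesis using yX[of i] by (simp add: cc_def pyz)
      next
        case F: False
        show ?thesis
        proof (cases "Suc i = m")
          case True then show ?thesis using yX[of i] ym z0 by (simp add: cc_def pyz)
        next
          case False
          then have "i \<ge> m" "Suc i - m = Suc (i - m)" using F by auto
          then show ?thesis using zX[of "i-m"] th[of i] by (simp add: cc_def pyz)
        qed
      qed
    qed
    have sh: "shiftn m (cc p) = z" by (auto simp: shiftn_def cc_def pyz)
    have agree: "\<forall>i\<le>m. fst p i = cc p i" using ym z0 by (auto simp: cc_def pyz)
    have shmn: "shiftn (m+n) (cc p) = \<xi> ((\<theta>^^(m+n)) \<omega>)"
    proof -
      have "shiftn (m+n) (cc p) = shiftn n (shiftn m (cc p))" by (simp add: shiftn_def ac_simps)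
      also have "\<dots> = \<xi> ((\<theta>^^(m+n)) \<omega>)" using zB sh thmn unfolding B_def by simp
      finally show ?thesis .
    qed
    have c0: "cc p 0 = a" using yA z0 unfolding A_def by (auto simp: cc_def pyz)
    show ?thesis using X sh agree shmn c0 pyz unfolding C_def by simp
  qed
  have inj: "inj_on cc (A \<times> B)"
  proof (rule inj_onI)
    fix p q assume p: "p \<in> A \<times> B" and q: "q \<in> A \<times> B" and e: "cc p = cc q"
    have "snd p = snd q" using props[OF p] props[OF q] e by simp
    moreover have "fst p = fst q"
    proof
      fix i show "fst p i = fst q i"
      proof (cases "i < m")
        case True
        have "cc p i = cc q i" using e by simp
        then show ?thesis using True by (simp add: cc_def)
      next
        case False
        have "shiftn m (fst p) = shiftn m (fst q)" using p q unfolding A_def by auto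
        then have "fst p ((i - m) + m) = fst q ((i - m) + m)" unfolding shiftn_def by metis
        then show ?thesis using False by simp
      qed
    qed
    ultimately show "p = q" by (simp add: prod_eq_iff)
  qed
  have pw: "ennreal (exp (phin \<theta> \<phi> \<omega> m (fst p))) * ennreal (exp (phin \<theta> \<phi> ((\<theta>^^m) \<omega>) n (snd p)))
      \<le> ennreal Bc * h (cc p)" if p: "p \<in> A \<times> B" for p
  proof -
    have yX: "fst p \<in> Xfib \<theta> L \<alpha> \<omega>" using p unfolding A_def by auto
    note pr = props[OF p]
    have b1: "phin \<theta> \<phi> \<omega> m (fst p) \<le> phin \<theta> \<phi> \<omega> m (cc p) + logB M \<theta> r \<kappa> ((\<theta>^^m) \<omega>)"
      by (rule pot_bound[OF base w r kap hV hs yX]) (use pr in auto)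
    have e: "phin \<theta> \<phi> \<omega> (m+n) (cc p) = phin \<theta> \<phi> \<omega> m (cc p) + phin \<theta> \<phi> ((\<theta>^^m) \<omega>) n (snd p)"
      using phin_add[of \<theta> \<phi> \<omega> m n "cc p"] pr by simp
    have "exp (phin \<theta> \<phi> \<omega> m (fst p)) * exp (phin \<theta> \<phi> ((\<theta>^^m) \<omega>) n (snd p))
        \<le> Bc * exp (phin \<theta> \<phi> \<omega> (m+n) (cc p))"
      unfolding Bc_def Bfun_def e exp_add[symmetric] using b1 by simp
    moreover have "Bc \<ge> 0" unfolding Bc_def Bfun_def by simp
    ultimately show ?thesis unfolding h_def by (simp add: ennreal_mult[symmetric] ennreal_leI)
  qed
  have "Zfun \<theta> L \<alpha> \<phi> \<xi> a \<omega> m * Zfun \<theta> L \<alpha> \<phi> \<xi> a ((\<theta>^^m) \<omega>) n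
      = (\<integral>\<^sup>+p. ennreal (exp (phin \<theta> \<phi> \<omega> m (fst p))) * ennreal (exp (phin \<theta> \<phi> ((\<theta>^^m) \<omega>) n (snd p))) \<partial>count_space (A \<times> B))"
    unfolding Z_rewrite A_def B_def by (rule prod_count)
  also have "\<dots> \<le> (\<integral>\<^sup>+p. ennreal Bc * h (cc p) \<partial>count_space (A \<times> B))"
    by (rule nn_integral_mono) (use pw in simp)
  also have "\<dots> = ennreal Bc * (\<integral>\<^sup>+p. h (cc p) \<partial>count_space (A \<times> B))"
    by (rule nn_integral_cmult) simp
  also have "\<dots> \<le> ennreal Bc * (\<integral>\<^sup>+u. h u \<partial>count_space C)"
    by (intro mult_left_mono reindex_le[OF inj]) (use props in auto)
  also have "\<dots> = ennreal Bc * Zfun \<theta> L \<alpha> \<phi> \<xi> a \<omega> (m+n)"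
    unfolding Z_rewrite C_def h_def ..
  finally show ?thesis unfolding Bc_def .
qed



lemma pow_meas:
  assumes base: "base_system M \<theta>"
  shows "(\<theta>^^k) \<in> M \<rightarrow>\<^sub>M M"
proof (induction k)
  case 0 then show ?case by simp
next
  case (Suc k)
  have t: "\<theta> \<in> M \<rightarrow>\<^sub>M M" using base by (simp add: base_system_def)
  show ?case using measurable_comp[OF Suc t] by (simp add: o_def)
qed

lemma pow_pres:
  assumes base: "base_system M \<theta>"
  shows "A \<in> sets M \<Longrightarrow> emeasure M ((\<theta>^^k) -` A \<inter> space M) = emeasure M A"
proof (induction k arbitrary: A)
  case 0 then show ?case using sets.sets_into_space[OF 0] by (simp add: Int_absorb2)
next
  case (Suc k)
  have t: "\<theta> \<in> M \<rightarrow>\<^sub>M M" using base by (simp add: base_system_def)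
  have pres: "\<forall>A\<in>sets M. emeasure M (\<theta> -` A \<inter> space M) = emeasure M A" using base by (simp add: base_system_def)
  have sp: "\<And>x. x \<in> space M \<Longrightarrow> \<theta> x \<in> space M" using t by (meson measurable_space)
  have e: "(\<theta>^^Suc k) -` A \<inter> space M = \<theta> -` ((\<theta>^^k) -` A \<inter> space M) \<inter> space M"
    using sp by (auto simp del: funpow.simps simp: funpow_Suc_right)
  have s: "(\<theta>^^k) -` A \<inter> space M \<in> sets M" using measurable_sets[OF pow_meas[OF base] Suc.prems] .
  have "emeasure M (\<theta> -` ((\<theta>^^k) -` A \<inter> space M) \<inter> space M) = emeasure M ((\<theta>^^k) -` A \<inter> space M)"
    using pres s by blast
  then show ?case unfolding e using Suc.IH[OF Suc.prems] by simp
qed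

lemma AE_pull:
  assumes base: "base_system M \<theta>" and ae: "AE \<omega> in M. P \<omega>"
  shows "AE \<omega> in M. P ((\<theta>^^k) \<omega>)"
proof -
  obtain N where N0: "{x \<in> space M. \<not> P x} \<subseteq> N" "emeasure M N = 0" "N \<in> sets M" using ae by (rule AE_E)
  then have N: "{x \<in> space M. \<not> P x} \<subseteq> N" "N \<in> null_sets M" by auto
  have s: "(\<theta>^^k) -` N \<inter> space M \<in> sets M" using measurable_sets[OF pow_meas[OF base]] N(2) by auto
  have "emeasure M ((\<theta>^^k) -` N \<inter> space M) = 0" using pow_pres[OF base, of N k] N0 by simp
  then have nn: "(\<theta>^^k) -` N \<inter> space M \<in> null_sets M" using s by auto
  show ?thesis
  proof (rule AE_I'[OF nn])
    show "{x \<in> space M. \<not> P ((\<theta>^^k) x)} \<subseteq> (\<theta>^^k) -` N \<inter> space M"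
      using N(1) base_space_pow[OF base] by auto
  qed
qed



theorem mainTheorem3:
  fixes M :: "'w measure" and \<theta> :: "'w \<Rightarrow> 'w" and \<L> :: "'w \<Rightarrow> enat"
    and \<alpha> :: "'w \<Rightarrow> nat \<Rightarrow> nat \<Rightarrow> bool" and \<phi> :: "'w \<Rightarrow> (nat \<Rightarrow> nat) \<Rightarrow> real"
    and r :: real and \<kappa> :: "'w \<Rightarrow> real" and Nm :: "nat \<Rightarrow> nat \<Rightarrow> 'w \<Rightarrow> nat"
    and \<xi> :: "'w \<Rightarrow> nat \<Rightarrow> nat" and a N :: nat
  assumes base: "base_system M \<theta>"
    and shsp: "shift_space M \<theta> \<L> \<alpha>"
    and mix: "top_mixing_with M \<theta> \<L> \<alpha> Nm"
    and pot: "potential M \<theta> \<L> \<alpha> \<phi>"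
    and h2: "H2 M \<theta> \<L> \<alpha> \<phi> r \<kappa>"
    and xi_meas: "\<xi> \<in> M \<rightarrow>\<^sub>M seq_measure"
    and xi_X: "\<forall>\<omega>\<in>space M. \<xi> \<omega> \<in> Xfib \<theta> \<L> \<alpha> \<omega>"
    and xi_a: "\<forall>\<omega>\<in>Omega_w M \<theta> \<L> \<alpha> [a]. \<xi> \<omega> \<in> cyl \<theta> \<L> \<alpha> \<omega> [a]"
    and a_W1: "[a] \<in> Wn M \<theta> \<L> \<alpha> 1"
    and pos: "measure M {\<omega> \<in> Omega_w M \<theta> \<L> \<alpha> [a]. Nm a a \<omega> \<le> N} > 0"
  shows "AE \<omega> in M. \<omega> \<in> {\<omega> \<in> Omega_w M \<theta> \<L> \<alpha> [a]. Nm a a \<omega> \<le> N} \<longrightarrow>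
           (\<forall>m n. N \<le> m \<longrightarrow> N \<le> n \<longrightarrow>
              (\<theta>^^m) \<omega> \<in> {\<omega> \<in> Omega_w M \<theta> \<L> \<alpha> [a]. Nm a a \<omega> \<le> N} \<longrightarrow>
              (\<theta>^^(m+n)) \<omega> \<in> {\<omega> \<in> Omega_w M \<theta> \<L> \<alpha> [a]. Nm a a \<omega> \<le> N} \<longrightarrow>
              Zfun \<theta> \<L> \<alpha> \<phi> \<xi> a \<omega> m * Zfun \<theta> \<L> \<alpha> \<phi> \<xi> a ((\<theta>^^m) \<omega>) n
                \<le> ennreal (Bfun M \<theta> r \<kappa> ((\<theta>^^m) \<omega>)) * Zfun \<theta> \<L> \<alpha> \<phi> \<xi> a \<omega> (m+n))"
proof -
  have hol: "hoelder M \<theta> \<L> \<alpha> \<phi> 2 r \<kappa>" and aes: "AE \<omega> in M. summable (\<lambda>j. \<kappa> ((theta_inv M \<theta> ^^ Suc j) \<omega>) * r ^ Suc j)"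
    using h2 unfolding H2_def by auto
  have r: "0 < r" "r < 1" and kap: "\<forall>x\<in>space M. \<kappa> x \<ge> 1"
    and aev: "AE \<omega> in M. \<forall>j\<ge>2. Var \<theta> \<L> \<alpha> \<phi> \<omega> j \<le> ereal (\<kappa> \<omega> * r ^ j)"
    using hol unfolding hoelder_def by auto
  define P where "P \<omega> \<longleftrightarrow> (\<forall>j\<ge>2. Var \<theta> \<L> \<alpha> \<phi> \<omega> j \<le> ereal (\<kappa> \<omega> * r ^ j))
      \<and> summable (\<lambda>j. \<kappa> ((theta_inv M \<theta> ^^ Suc j) \<omega>) * r ^ Suc j)" for \<omega>
  have aeP: "AE \<omega> in M. P \<omega>" using aev aes unfolding P_def by auto
  have aeall: "AE \<omega> in M. \<forall>k. P ((\<theta>^^k) \<omega>)"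
    by (rule AE_all_countable[THEN iffD2]) (use AE_pull[OF base aeP] in blast)
  show ?thesis
    using aeall
  proof (rule eventually_mono)
    fix \<omega> assume hk: "\<forall>k. P ((\<theta>^^k) \<omega>)"
    show "\<omega> \<in> {\<omega> \<in> Omega_w M \<theta> \<L> \<alpha> [a]. Nm a a \<omega> \<le> N} \<longrightarrow>
           (\<forall>m n. N \<le> m \<longrightarrow> N \<le> n \<longrightarrow>
              (\<theta>^^m) \<omega> \<in> {\<omega> \<in> Omega_w M \<theta> \<L> \<alpha> [a]. Nm a a \<omega> \<le> N} \<longrightarrow>
              (\<theta>^^(m+n)) \<omega> \<in> {\<omega> \<in> Omega_w M \<theta> \<L> \<alpha> [a]. Nm a a \<omega> \<le> N} \<longrightarrow>
              Zfun \<theta> \<L> \<alpha> \<phi> \<xi> a \<omega> m * Zfun \<theta> \<L> \<alpha> \<phi> \<xi> a ((\<theta>^^m) \<omega>) n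
                \<le> ennreal (Bfun M \<theta> r \<kappa> ((\<theta>^^m) \<omega>)) * Zfun \<theta> \<L> \<alpha> \<phi> \<xi> a \<omega> (m+n))"
    proof (intro impI allI)
      fix m n
      assume w1: "\<omega> \<in> {\<omega> \<in> Omega_w M \<theta> \<L> \<alpha> [a]. Nm a a \<omega> \<le> N}"
        and wm: "(\<theta>^^m) \<omega> \<in> {\<omega> \<in> Omega_w M \<theta> \<L> \<alpha> [a]. Nm a a \<omega> \<le> N}"
      have w: "\<omega> \<in> space M" using w1 unfolding Omega_w_def by auto
      have ha: "\<xi> ((\<theta>^^m) \<omega>) 0 = a" using xi_a wm unfolding cyl_def by auto
      have hV: "\<forall>k. \<forall>j\<ge>2. Var \<theta> \<L> \<alpha> \<phi> ((\<theta>^^k) \<omega>) j \<le> ereal (\<kappa> ((\<theta>^^k) \<omega>) * r ^ j)"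
        using hk unfolding P_def by blast
      have hs: "summable (\<lambda>j. \<kappa> ((theta_inv M \<theta> ^^ Suc j) ((\<theta>^^m) \<omega>)) * r ^ Suc j)"
        using hk unfolding P_def by blast
      show "Zfun \<theta> \<L> \<alpha> \<phi> \<xi> a \<omega> m * Zfun \<theta> \<L> \<alpha> \<phi> \<xi> a ((\<theta>^^m) \<omega>) n
                \<le> ennreal (Bfun M \<theta> r \<kappa> ((\<theta>^^m) \<omega>)) * Zfun \<theta> \<L> \<alpha> \<phi> \<xi> a \<omega> (m+n)"
        using key[of M \<theta> \<omega> r \<kappa> \<L> \<alpha> \<phi> m \<xi> a n] base w r kap hV hs ha by blast
    qed
  qed
qed


end
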